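(* Let $G$ be a grid-labelled graph of type $(a,b)$ with at least one edge. If $\rho(G)$ is separable, then $D(G)=D(\Gamma(G))$, i.e. every vertex has the same degree in $G$ and in $\Gamma(G)$.
   Context: A grid-labelled graph of type $(a,b)$ is a simple graph $G$ whose vertex set is the grid $[a]\times[b]$; $D(G)$ denotes its (diagonal) degree matrix and $L(G)=D(G)-A(G)$ its combinatorial Laplacian. If $G$ has $m\ge1$ edges, $\rho(G)=L(G)/(2m)$, viewed as a density matrix on $\mathbb{C}^a\otimes\mathbb{C}^b$ with vertex $(i,j)$ corresponding to $|i\rangle\otimes|j\rangle$. Separable means a convex combination of tensor products of density matrices. The partial transpose of $G$ is the grid-labelled graph $\Gamma(G)$ of type $(a,b)$ with edge set $\{\{(k,j),(i,l)\}:\{(i,j),(k,l)\}\in E(G)\}$ (horizontal and vertical edges are unchanged; each diagonal edge is replaced by its "transposed" edge). *)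

theory Defs
  imports Complex_Main "Jordan_Normal_Form.Matrix"
begin

text \<open>Grid vertices are 0-based: the grid [a] x [b] is {0..<a} x {0..<b}.
  A simple graph is given by its edge set, a set of 2-element vertex sets.\<close>

definition grid :: "nat \<Rightarrow> nat \<Rightarrow> (nat \<times> nat) set" where
  "grid a b = {0..<a} \<times> {0..<b}"

definition grid_graph :: "nat \<Rightarrow> nat \<Rightarrow> (nat \<times> nat) set set \<Rightarrow> bool" where
  "grid_graph a b E \<longleftrightarrow>
     (\<forall>e\<in>E. \<exists>u v. e = {u, v} \<and> u \<noteq> v \<and> u \<in> grid a b \<and> v \<in> grid a b)"

definition degree :: "(nat \<times> nat) set set \<Rightarrow> nat \<times> nat \<Rightarrow> nat" where
  "degree E v = card {e\<in>E. v \<in> e}"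

text \<open>Vertex (i,j) corresponds to basis vector |i> (x) |j>, i.e. index i*b+j;
  index k corresponds to vertex (k div b, k mod b).\<close>

definition vtx :: "nat \<Rightarrow> nat \<Rightarrow> nat \<times> nat" where
  "vtx b k = (k div b, k mod b)"

definition degree_mat :: "nat \<Rightarrow> nat \<Rightarrow> (nat \<times> nat) set set \<Rightarrow> complex mat" where
  "degree_mat a b E = mat (a*b) (a*b)
     (\<lambda>(k,l). if k = l then of_nat (degree E (vtx b k)) else 0)"

definition adjacency_mat :: "nat \<Rightarrow> nat \<Rightarrow> (nat \<times> nat) set set \<Rightarrow> complex mat" where
  "adjacency_mat a b E = mat (a*b) (a*b)
     (\<lambda>(k,l). if {vtx b k, vtx b l} \<in> E then 1 else 0)"

definition laplacian_mat :: "nat \<Rightarrow> nat \<Rightarrow> (nat \<times> nat) set set \<Rightarrow> complex mat" where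
  "laplacian_mat a b E = degree_mat a b E - adjacency_mat a b E"

definition rho :: "nat \<Rightarrow> nat \<Rightarrow> (nat \<times> nat) set set \<Rightarrow> complex mat" where
  "rho a b E = (1 / (2 * of_nat (card E))) \<cdot>\<^sub>m laplacian_mat a b E"

definition partial_transpose :: "(nat \<times> nat) set set \<Rightarrow> (nat \<times> nat) set set" where
  "partial_transpose E = {{(k, j), (i, l)} | i j k l. {(i, j), (k, l)} \<in> E}"

definition kron :: "complex mat \<Rightarrow> complex mat \<Rightarrow> complex mat" where
  "kron A B = mat (dim_row A * dim_row B) (dim_col A * dim_col B)
     (\<lambda>(r,c). A $$ (r div dim_row B, c div dim_col B) * B $$ (r mod dim_row B, c mod dim_col B))"

definition hermitian_mat :: "nat \<Rightarrow> complex mat \<Rightarrow> bool" where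
  "hermitian_mat n A \<longleftrightarrow> A \<in> carrier_mat n n \<and>
     (\<forall>i<n. \<forall>j<n. A $$ (i, j) = cnj (A $$ (j, i)))"

definition psd_mat :: "nat \<Rightarrow> complex mat \<Rightarrow> bool" where
  "psd_mat n A \<longleftrightarrow> hermitian_mat n A \<and>
     (\<forall>v :: nat \<Rightarrow> complex. 0 \<le> Re (\<Sum>i<n. \<Sum>j<n. cnj (v i) * A $$ (i, j) * v j))"

definition density_mat :: "nat \<Rightarrow> complex mat \<Rightarrow> bool" where
  "density_mat n A \<longleftrightarrow> psd_mat n A \<and> (\<Sum>i<n. A $$ (i, i)) = 1"

definition separable :: "nat \<Rightarrow> nat \<Rightarrow> complex mat \<Rightarrow> bool" where
  "separable a b R \<longleftrightarrow> R \<in> carrier_mat (a*b) (a*b) \<and>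
     (\<exists>(N::nat) (p :: nat \<Rightarrow> real) (A :: nat \<Rightarrow> complex mat) (B :: nat \<Rightarrow> complex mat).
        (\<forall>k<N. 0 \<le> p k \<and> density_mat a (A k) \<and> density_mat b (B k)) \<and>
        (\<Sum>k<N. p k) = 1 \<and>
        (\<forall>r<a*b. \<forall>c<a*b. R $$ (r, c) = (\<Sum>k<N. of_real (p k) * kron (A k) (B k) $$ (r, c))))"

end

theory Submission
  imports Defs
begin


lemma quad_nonneg_lin_zero:
  fixes x d :: real
  assumes "\<And>t::real. 0 \<le> t * x + t^2 * d"
  shows "x = 0"
proof (rule ccontr)
  assume nz: "x \<noteq> 0"
  define t where "t = - x / (\<bar>d\<bar> + 1)"
  have pos: "\<bar>d\<bar> + 1 > 0" by simp
  have "t * x + t^2 * d = x^2 * (d - \<bar>d\<bar> - 1) / (\<bar>d\<bar> + 1)^2"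
  proof -
    define D where "D = \<bar>d\<bar> + 1"
    have D: "D \<noteq> 0" using pos D_def by simp
    have tD: "t = - x / D" by (simp add: t_def D_def)
    have "t * x + t^2 * d = (- x / D) * x + (- x / D)^2 * d" by (simp add: tD)
    also have "\<dots> = x^2 * (d - D) / D^2" using D
      by (simp add: field_simps power2_eq_square)
    finally have "t * x + t^2 * d = x^2 * (d - D) / D^2" .
    then show ?thesis by (simp add: D_def)
  qed
  moreover have "x^2 * (d - \<bar>d\<bar> - 1) / (\<bar>d\<bar> + 1)^2 < 0"
    using nz pos by (intro divide_neg_pos mult_pos_neg) auto
  ultimately show False using assms[of t] by linarith
qed

lemma sum_if_cond_out: "(\<Sum>q\<in>S. if P then f q else 0) = (if P then (\<Sum>q\<in>S. f q) else 0)"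
  by simp

lemma psd_row_zero:
  assumes psd: "psd_mat n A" and S: "(\<Sum>i<n. \<Sum>j<n. A$$(i,j)) = 0" and i: "i < n"
  shows "(\<Sum>j<n. A$$(i,j)) = 0"
proof -
  define R where "R = (\<Sum>j<n. A$$(i,j))"
  have herm: "\<And>p q. p < n \<Longrightarrow> q < n \<Longrightarrow> A$$(p,q) = cnj (A$$(q,p))"
    using psd unfolding psd_mat_def hermitian_mat_def by blast
  have Cs: "(\<Sum>p<n. A$$(p,i)) = cnj R"
  proof -
    have "(\<Sum>p<n. A$$(p,i)) = (\<Sum>p<n. cnj (A$$(i,p)))"
      by (rule sum.cong) (auto intro: herm i)
    then show ?thesis unfolding R_def by simp
  qed
  have key: "Re (cnj c * R) = 0" for c :: complex
  proof -
    have "\<And>t::real. 0 \<le> t * (2 * Re (cnj c * R)) + t^2 * (Re (cnj c * c * A$$(i,i)))"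
    proof -
      fix t :: real
      define v where "v = (\<lambda>q. 1 + of_real t * c * (if q = i then 1 else 0))"
      have "0 \<le> Re (\<Sum>p<n. \<Sum>q<n. cnj (v p) * A $$ (p, q) * v q)"
        using psd unfolding psd_mat_def by blast
      also have "(\<Sum>p<n. \<Sum>q<n. cnj (v p) * A $$ (p, q) * v q) =
          (\<Sum>p<n. \<Sum>q<n. A$$(p,q)) + of_real t * c * (\<Sum>p<n. A$$(p,i))
          + of_real t * cnj c * (\<Sum>q<n. A$$(i,q)) + of_real t ^2 * cnj c * c * A$$(i,i)"
      proof -
        have e: "cnj (v p) * A $$ (p, q) * v q = A$$(p,q) + (if q = i then of_real t * c * A$$(p,i) else 0)
           + (if p = i then of_real t * cnj c * A$$(i,q) else 0)
           + (if p = i then (if q = i then of_real t ^2 * cnj c * c * A$$(i,i) else 0) else 0)" for p q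
          by (simp add: v_def algebra_simps power2_eq_square)
        show ?thesis unfolding e using i
          by (simp add: sum.distrib sum_distrib_left sum_if_cond_out)
      qed
      finally show "0 \<le> t * (2 * Re (cnj c * R)) + t^2 * (Re (cnj c * c * A$$(i,i)))"
        using S Cs unfolding R_def[symmetric]
        by (simp add: algebra_simps power2_eq_square)
    qed
    then have "2 * Re (cnj c * R) = 0" by (rule quad_nonneg_lin_zero)
    then show ?thesis by simp
  qed
  have "Re R = 0" using key[of 1] by simp
  moreover have "Im R = 0" using key[of \<i>] by simp
  ultimately show ?thesis unfolding R_def[symmetric] by (simp add: complex_eq_iff)
qed


lemma finite_grid: "finite (grid a b)" by (simp add: grid_def)

lemma grid_graph_finite: "grid_graph a b E \<Longrightarrow> finite E"
proof -
  assume g: "grid_graph a b E"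
  have "E \<subseteq> Pow (grid a b)"
  proof
    fix e assume "e \<in> E"
    with g obtain u v where "e = {u,v}" "u \<in> grid a b" "v \<in> grid a b"
      unfolding grid_graph_def by blast
    then show "e \<in> Pow (grid a b)" by simp
  qed
  then show ?thesis by (rule finite_subset) (simp add: finite_grid)
qed

lemma degree_neigh:
  assumes g: "grid_graph a b F" and v: "v \<in> grid a b"
  shows "degree F v = card {w \<in> grid a b. {v, w} \<in> F}"
proof -
  have "bij_betw (\<lambda>w. {v, w}) {w \<in> grid a b. {v, w} \<in> F} {e\<in>F. v \<in> e}"
  proof (rule bij_betwI')
    fix x y assume "x \<in> {w \<in> grid a b. {v, w} \<in> F}" "y \<in> {w \<in> grid a b. {v, w} \<in> F}"
    show "({v, x} = {v, y}) = (x = y)" by (auto simp: doubleton_eq_iff)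
  next
    fix x assume "x \<in> {w \<in> grid a b. {v, w} \<in> F}"
    then show "{v, x} \<in> {e \<in> F. v \<in> e}" by simp
  next
    fix y assume y: "y \<in> {e \<in> F. v \<in> e}"
    from y g obtain u w where uw: "y = {u, w}" "u \<in> grid a b" "w \<in> grid a b"
      unfolding grid_graph_def by blast
    from y have yF: "y \<in> F" "v \<in> y" by auto
    show "\<exists>x\<in>{w \<in> grid a b. {v, w} \<in> F}. y = {v, x}"
    proof (cases "v = u")
      case True
      show ?thesis using True uw yF by (intro bexI[of _ w]) auto
    next
      case False
      then have "v = w" using uw yF by auto
      then have "y = {v, u}" using uw by (simp add: insert_commute)
      then show ?thesis using uw yF by (intro bexI[of _ u]) auto
    qed
  qed
  then show ?thesis unfolding degree_def by (simp add: bij_betw_same_card)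
qed

lemma pt_edge: "({(i,j),(k,l)} \<in> partial_transpose E) \<longleftrightarrow> ({(i,l),(k,j)} \<in> E)"
proof
  assume "{(i,l),(k,j)} \<in> E"
  then have h: "{(k,j),(i,l)} \<in> E" by (simp add: insert_commute)
  have "\<exists>i' j' k' l'. {(i,j),(k,l)} = {(k',j'),(i',l')} \<and> {(i',j'),(k',l')} \<in> E"
    using h by blast
  then show "{(i,j),(k,l)} \<in> partial_transpose E"
    unfolding partial_transpose_def by blast
next
  assume "{(i,j),(k,l)} \<in> partial_transpose E"
  then obtain i' j' k' l' where eq: "{(i,j),(k,l)} = {(k',j'),(i',l')}" and e: "{(i',j'),(k',l')} \<in> E"
    unfolding partial_transpose_def by blast
  from eq have "((i,j) = (k',j') \<and> (k,l) = (i',l')) \<or> ((i,j) = (i',l') \<and> (k,l) = (k',j'))"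
    by (simp add: doubleton_eq_iff)
  then show "{(i,l),(k,j)} \<in> E"
  proof
    assume "(i,j) = (k',j') \<and> (k,l) = (i',l')"
    then show ?thesis using e by (auto simp: insert_commute)
  next
    assume "(i,j) = (i',l') \<and> (k,l) = (k',j')"
    then show ?thesis using e by auto
  qed
qed


lemma pt_grid_graph:
  assumes g: "grid_graph a b E"
  shows "grid_graph a b (partial_transpose E)"
  unfolding grid_graph_def
proof
  fix e assume "e \<in> partial_transpose E"
  then obtain i j k l where e: "e = {(k,j),(i,l)}" and o: "{(i,j),(k,l)} \<in> E"
    unfolding partial_transpose_def by blast
  from o g obtain u v where uv: "{(i,j),(k,l)} = {u,v}" "u \<noteq> v" "u \<in> grid a b" "v \<in> grid a b"
    unfolding grid_graph_def by blast
  from uv(1) have c: "((i,j) = u \<and> (k,l) = v) \<or> ((i,j) = v \<and> (k,l) = u)"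
    by (simp add: doubleton_eq_iff)
  have "(i,j) \<in> grid a b" "(k,l) \<in> grid a b" "(i,j) \<noteq> (k,l)"
    using c uv(2-4) by auto
  then have "i < a" "k < a" "j < b" "l < b" "(i,j) \<noteq> (k,l)"
    by (auto simp: grid_def)
  then show "\<exists>u v. e = {u, v} \<and> u \<noteq> v \<and> u \<in> grid a b \<and> v \<in> grid a b"
    using e by (auto simp: grid_def)
qed

lemma count_sum:
  "(\<Sum>k<a. \<Sum>l<b. (if P (k,l) then 1 else 0 :: complex)) = of_nat (card {w \<in> grid a b. P w})"
proof -
  have "of_nat (card {w \<in> grid a b. P w}) = (\<Sum>w\<in>{w \<in> grid a b. P w}. (1::complex))" by simp
  also have "\<dots> = (\<Sum>w\<in>grid a b. if P w then 1 else 0)"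
    by (rule sum.inter_filter[OF finite_grid])
  also have "\<dots> = (\<Sum>k<a. \<Sum>l<b. (if P (k,l) then 1 else 0 :: complex))"
    unfolding grid_def by (simp add: sum.cartesian_product lessThan_atLeast0)
  finally show ?thesis by simp
qed


lemma idx_lt: "i < a \<Longrightarrow> j < b \<Longrightarrow> i*b+j < a*(b::nat)"
proof -
  assume h: "i<a" "j<b"
  then have "i*b + j < i*b + b" by simp
  also have "\<dots> = (i+1)*b" by simp
  also have "\<dots> \<le> a*b" using h by (intro mult_right_mono) auto
  finally show ?thesis .
qed

lemma sum_grid_diag:
  fixes i j a b :: nat
  assumes "i < a" "j < b"
  shows "(\<Sum>k<a. \<Sum>l<b. if (k,l) = (i,j) then (d::complex) else 0) = d"
proof -
  have "(\<Sum>k<a. \<Sum>l<b. if (k,l) = (i,j) then (d::complex) else 0)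
      = d * (\<Sum>k<a. \<Sum>l<b. if (k,l) = (i,j) then 1 else 0)"
    by (auto simp: sum_distrib_left intro!: sum.cong)
  also have "(\<Sum>k<a. \<Sum>l<b. if (k,l) = (i,j) then (1::complex) else 0) = of_nat (card {w \<in> grid a b. w = (i,j)})"
    by (rule count_sum)
  also have "{w \<in> grid a b. w = (i,j)} = {(i,j)}" using assms by (auto simp: grid_def)
  finally show ?thesis by simp
qed

lemma test_swap:
  shows "(\<Sum>i<a. \<Sum>j<b. \<Sum>k<a. \<Sum>l<b. \<Sum>m<N. of_real (p m) * (A m i k * B m j l))
    = (\<Sum>m<N. of_real (p m) * ((\<Sum>i<a. \<Sum>k<a. A m i k) * (\<Sum>j<b. \<Sum>l<b. B m j l)))"
  by (simp only: sum_distrib_left sum_distrib_right sum.swap[where A="{..<b}" and B="{..<N}"]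
     sum.swap[where A="{..<a}" and B="{..<N}"] sum.swap[where A="{..<a}" and B="{..<b}"] mult.assoc)

lemma test_swap2:
  shows "(\<Sum>k<a. \<Sum>l<b. \<Sum>m<N. of_real (p m) * (A m k * B m l))
    = (\<Sum>m<N. of_real (p m) * ((\<Sum>k<a. A m k) * (\<Sum>l<b. B m l)) :: complex)"
  by (simp only: sum_distrib_left sum_distrib_right sum.swap[where A="{..<b}" and B="{..<N}"]
     sum.swap[where A="{..<a}" and B="{..<N}"] sum.swap[where A="{..<a}" and B="{..<b}"] mult.assoc)

lemma herm_sum_real:
  assumes "hermitian_mat n A"
  shows "cnj (\<Sum>i<n. \<Sum>k<n. A$$(i,k)) = (\<Sum>i<n. \<Sum>k<n. A$$(i,k))"
proof -
  have "cnj (\<Sum>i<n. \<Sum>k<n. A$$(i,k)) = (\<Sum>i<n. \<Sum>k<n. cnj (A$$(i,k)))" by simp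
  also have "\<dots> = (\<Sum>i<n. \<Sum>k<n. A$$(k,i))"
    using assms unfolding hermitian_mat_def by (intro sum.cong refl) (metis complex_cnj_cnj lessThan_iff)
  also have "\<dots> = (\<Sum>i<n. \<Sum>k<n. A$$(i,k))" by (rule sum.swap)
  finally show ?thesis .
qed

lemma herm_col_zero:
  assumes "hermitian_mat n A" "(\<Sum>l<n. A$$(j,l)) = 0" "j < n"
  shows "(\<Sum>l<n. A$$(l,j)) = 0"
proof -
  have "(\<Sum>l<n. A$$(l,j)) = (\<Sum>l<n. cnj (A$$(j,l)))"
  proof (rule sum.cong[OF refl])
    fix l assume "l \<in> {..<n}"
    then have "l < n" by simp
    then show "A$$(l,j) = cnj (A$$(j,l))" using assms(1,3) unfolding hermitian_mat_def by blast
  qed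
  also have "\<dots> = cnj (\<Sum>l<n. A$$(j,l))" by simp
  finally show ?thesis using assms(2) by simp
qed

theorem mainTheorem4:
  fixes a b :: nat and E :: "(nat \<times> nat) set set"
  assumes "grid_graph a b E"
    and "E \<noteq> {}"
    and "separable a b (rho a b E)"
  shows "degree_mat a b E = degree_mat a b (partial_transpose E)"
proof -
  note g = assms(1)
  have finE: "finite E" by (rule grid_graph_finite[OF g])
  have m0: "card E > 0" using finE assms(2) card_gt_0_iff by blast
  define cc :: complex where "cc = 1 / (2 * of_nat (card E))"
  have cc0: "cc \<noteq> 0" using m0 by (simp add: cc_def)
  define Lv where "Lv = (\<lambda>u w. (if u = w then of_nat (degree E u) else 0) - (if {u,w} \<in> E then 1 else (0::complex)))"
  from assms(3) obtain N :: nat and p :: "nat \<Rightarrow> real" and A B :: "nat \<Rightarrow> complex mat" where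
    all: "(\<forall>k<N. 0 \<le> p k \<and> density_mat a (A k) \<and> density_mat b (B k)) \<and> (\<Sum>k<N. p k) = 1 \<and>
     (\<forall>r<a*b. \<forall>c<a*b. rho a b E $$ (r, c) = (\<Sum>k<N. of_real (p k) * kron (A k) (B k) $$ (r, c)))"
    unfolding separable_def by blast
  have pAB: "\<forall>k<N. 0 \<le> p k \<and> density_mat a (A k) \<and> density_mat b (B k)" and
    req: "\<forall>r<a*b. \<forall>c<a*b. rho a b E $$ (r, c) = (\<Sum>k<N. of_real (p k) * kron (A k) (B k) $$ (r, c))"
    using all by auto
  have psdA: "psd_mat a (A m)" and psdB: "psd_mat b (B m)" and pnn: "0 \<le> p m" if "m < N" for m
    using pAB that unfolding density_mat_def by auto
  have hA: "hermitian_mat a (A m)" and hB: "hermitian_mat b (B m)" if "m < N" for m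
    using psdA[OF that] psdB[OF that] unfolding psd_mat_def by auto
  have Adim: "dim_row (A m) = a" "dim_col (A m) = a" and Bdim: "dim_row (B m) = b" "dim_col (B m) = b"
    if "m<N" for m
  proof -
    have "A m \<in> carrier_mat a a" "B m \<in> carrier_mat b b"
      using hA[OF that] hB[OF that] unfolding hermitian_mat_def by blast+
    then show "dim_row (A m) = a" "dim_col (A m) = a" "dim_row (B m) = b" "dim_col (B m) = b" by auto
  qed
  have vtx_inj: "(vtx b r = vtx b c) = (r = c)" for r c
    unfolding vtx_def by (metis div_mult_mod_eq prod.inject)
  have rho_ent: "rho a b E $$ (r,c) = cc * Lv (vtx b r) (vtx b c)" if "r < a*b" "c < a*b" for r c
    using that unfolding rho_def laplacian_mat_def degree_mat_def adjacency_mat_def Lv_def cc_def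
    by (simp add: vtx_inj)
  have KE: "cc * Lv (i,j) (k,l) = (\<Sum>m<N. of_real (p m) * (A m $$ (i,k) * B m $$ (j,l)))"
    if "i<a" "j<b" "k<a" "l<b" for i j k l
  proof -
    have r: "i*b+j < a*b" "k*b+l < a*b" using idx_lt that by auto
    have v: "vtx b (i*b+j) = (i,j)" "vtx b (k*b+l) = (k,l)" using that by (simp_all add: vtx_def)
    have "cc * Lv (i,j) (k,l) = rho a b E $$ (i*b+j, k*b+l)" using rho_ent[OF r] v by simp
    also have "\<dots> = (\<Sum>m<N. of_real (p m) * kron (A m) (B m) $$ (i*b+j, k*b+l))" using req r by blast
    also have "\<dots> = (\<Sum>m<N. of_real (p m) * (A m $$ (i,k) * B m $$ (j,l)))"
    proof (rule sum.cong[OF refl])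
      fix m assume "m \<in> {..<N}"
      then have "m<N" by simp
      then show "of_real (p m) * kron (A m) (B m) $$ (i*b+j, k*b+l) = of_real (p m) * (A m $$ (i,k) * B m $$ (j,l))"
        using r that Adim Bdim unfolding kron_def by simp
    qed
    finally show ?thesis .
  qed
  have rowL: "(\<Sum>k<a. \<Sum>l<b. Lv (i,j) (k,l)) = 0" if "i<a" "j<b" for i j
  proof -
    have ij: "(i,j) \<in> grid a b" using that by (simp add: grid_def)
    have s1: "(\<Sum>k<a. \<Sum>l<b. (if (i,j) = (k,l) then of_nat (degree E (i,j)) else 0::complex))
        = of_nat (degree E (i,j))"
    proof -
      have "(\<Sum>k<a. \<Sum>l<b. (if (i,j) = (k,l) then of_nat (degree E (i,j)) else 0::complex))
        = (\<Sum>k<a. \<Sum>l<b. (if (k,l) = (i,j) then of_nat (degree E (i,j)) else 0::complex))"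
        by (intro sum.cong refl) auto
      also have "\<dots> = of_nat (degree E (i,j))" by (rule sum_grid_diag[OF that])
      finally show ?thesis .
    qed
    have s2: "(\<Sum>k<a. \<Sum>l<b. (if {(i,j),(k,l)} \<in> E then 1 else 0::complex)) = of_nat (degree E (i,j))"
      using count_sum[of "\<lambda>w. {(i,j),w} \<in> E"] degree_neigh[OF g ij] by simp
    have "(\<Sum>k<a. \<Sum>l<b. Lv (i,j) (k,l)) = (\<Sum>k<a. \<Sum>l<b. (if (i,j) = (k,l) then of_nat (degree E (i,j)) else 0::complex))
       - (\<Sum>k<a. \<Sum>l<b. (if {(i,j),(k,l)} \<in> E then 1 else 0::complex))"
      unfolding Lv_def by (simp add: sum_subtractf)
    then show ?thesis using s1 s2 by simp
  qed
  define sA where "sA m = (\<Sum>i<a. \<Sum>k<a. A m $$ (i,k))" for m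
  define sB where "sB m = (\<Sum>j<b. \<Sum>l<b. B m $$ (j,l))" for m
  have tot: "(\<Sum>m<N. of_real (p m) * (sA m * sB m)) = 0"
  proof -
    have "(\<Sum>m<N. of_real (p m) * (sA m * sB m)) =
      (\<Sum>i<a. \<Sum>j<b. \<Sum>k<a. \<Sum>l<b. \<Sum>m<N. of_real (p m) * (A m $$ (i,k) * B m $$ (j,l)))"
      unfolding sA_def sB_def using test_swap[where a=a and b=b and N=N and p=p and A="\<lambda>m i k. A m $$ (i,k)" and B="\<lambda>m j l. B m $$ (j,l)"]
      by simp
    also have "\<dots> = (\<Sum>i<a. \<Sum>j<b. \<Sum>k<a. \<Sum>l<b. cc * Lv (i,j) (k,l))"
      by (intro sum.cong refl) (simp add: KE)
    also have "\<dots> = (\<Sum>i<a. \<Sum>j<b. cc * (\<Sum>k<a. \<Sum>l<b. Lv (i,j) (k,l)))"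
      by (simp add: sum_distrib_left)
    also have "\<dots> = 0" by (simp add: rowL)
    finally show ?thesis .
  qed
  have sAr: "sA m = of_real (Re (sA m))" "0 \<le> Re (sA m)" if "m < N" for m
  proof -
    have "cnj (sA m) = sA m" unfolding sA_def by (rule herm_sum_real[OF hA[OF that]])
    then have "Im (cnj (sA m)) = Im (sA m)" by simp
    then have "Im (sA m) = 0" by simp
    then show "sA m = of_real (Re (sA m))" by (simp add: complex_eq_iff)
    have "\<forall>v::nat\<Rightarrow>complex. 0 \<le> Re (\<Sum>i<a. \<Sum>j<a. cnj (v i) * A m $$ (i, j) * v j)"
      using psdA[OF that] unfolding psd_mat_def by blast
    from this[rule_format, of "\<lambda>_. 1"] show "0 \<le> Re (sA m)" unfolding sA_def by simp
  qed
  have sBr: "sB m = of_real (Re (sB m))" "0 \<le> Re (sB m)" if "m < N" for m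
  proof -
    have "cnj (sB m) = sB m" unfolding sB_def by (rule herm_sum_real[OF hB[OF that]])
    then have "Im (cnj (sB m)) = Im (sB m)" by simp
    then have "Im (sB m) = 0" by simp
    then show "sB m = of_real (Re (sB m))" by (simp add: complex_eq_iff)
    have "\<forall>v::nat\<Rightarrow>complex. 0 \<le> Re (\<Sum>i<b. \<Sum>j<b. cnj (v i) * B m $$ (i, j) * v j)"
      using psdB[OF that] unfolding psd_mat_def by blast
    from this[rule_format, of "\<lambda>_. 1"] show "0 \<le> Re (sB m)" unfolding sB_def by simp
  qed
  have each: "p m = 0 \<or> sA m = 0 \<or> sB m = 0" if "m < N" for m
  proof -
    have "(\<Sum>m<N. p m * (Re (sA m) * Re (sB m))) = Re (\<Sum>m<N. of_real (p m) * (sA m * sB m))"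
    proof -
      have "Re (\<Sum>m<N. of_real (p m) * (sA m * sB m)) = (\<Sum>m<N. Re (of_real (p m) * (sA m * sB m)))"
        by (simp add: Re_sum)
      also have "\<dots> = (\<Sum>m<N. p m * (Re (sA m) * Re (sB m)))"
      proof (rule sum.cong[OF refl])
        fix m assume "m \<in> {..<N}"
        then have mN: "m < N" by simp
        have eqn: "of_real (p m) * (sA m * sB m) = of_real (p m * (Re (sA m) * Re (sB m)))"
          using sAr(1)[OF mN] sBr(1)[OF mN] by (metis of_real_mult)
        show "Re (of_real (p m) * (sA m * sB m)) = p m * (Re (sA m) * Re (sB m))"
          unfolding eqn by (rule Re_complex_of_real)
      qed
      finally show ?thesis by simp
    qed
    then have "(\<Sum>m<N. p m * (Re (sA m) * Re (sB m))) = 0" using tot by simp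
    moreover have "\<forall>m\<in>{..<N}. 0 \<le> p m * (Re (sA m) * Re (sB m))"
      using pnn sAr(2) sBr(2) by simp
    ultimately have "p m * (Re (sA m) * Re (sB m)) = 0"
      using sum_nonneg_eq_0_iff[of "{..<N}" "\<lambda>m. p m * (Re (sA m) * Re (sB m))"] that by auto
    then have "p m = 0 \<or> Re (sA m) = 0 \<or> Re (sB m) = 0" by simp
    then show ?thesis using sAr(1)[OF that] sBr(1)[OF that] by (metis of_real_0)
  qed
  have degeq: "degree E (i,j) = degree (partial_transpose E) (i,j)" if "i<a" "j<b" for i j
  proof -
    have ij: "(i,j) \<in> grid a b" using that by (simp add: grid_def)
    have zero: "(\<Sum>m<N. of_real (p m) * ((\<Sum>k<a. A m $$ (i,k)) * (\<Sum>l<b. B m $$ (l,j)))) = 0"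
    proof (rule sum.neutral, rule ballI)
      fix m assume "m \<in> {..<N}"
      then have mN: "m < N" by simp
      from each[OF mN] show "of_real (p m) * ((\<Sum>k<a. A m $$ (i,k)) * (\<Sum>l<b. B m $$ (l,j))) = 0"
      proof (elim disjE)
        assume "sA m = 0"
        then have "(\<Sum>k<a. A m $$ (i,k)) = 0"
          using psd_row_zero[OF psdA[OF mN] _ that(1)] unfolding sA_def by simp
        then show ?thesis by simp
      next
        assume "sB m = 0"
        then have "(\<Sum>l<b. B m $$ (j,l)) = 0"
          using psd_row_zero[OF psdB[OF mN] _ that(2)] unfolding sB_def by simp
        then have "(\<Sum>l<b. B m $$ (l,j)) = 0" by (rule herm_col_zero[OF hB[OF mN] _ that(2)])
        then show ?thesis by simp
      qed simp
    qed
    have "cc * (\<Sum>k<a. \<Sum>l<b. Lv (i,l) (k,j)) = (\<Sum>k<a. \<Sum>l<b. cc * Lv (i,l) (k,j))"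
      by (simp add: sum_distrib_left)
    also have "\<dots> = (\<Sum>k<a. \<Sum>l<b. \<Sum>m<N. of_real (p m) * (A m $$ (i,k) * B m $$ (l,j)))"
      using that by (intro sum.cong refl) (simp add: KE)
    also have "\<dots> = (\<Sum>m<N. of_real (p m) * ((\<Sum>k<a. A m $$ (i,k)) * (\<Sum>l<b. B m $$ (l,j))))"
      by (rule test_swap2)
    also have "\<dots> = 0" by (rule zero)
    finally have Lz: "(\<Sum>k<a. \<Sum>l<b. Lv (i,l) (k,j)) = 0" using cc0 by simp
    have s1: "(\<Sum>k<a. \<Sum>l<b. (if (i,l) = (k,j) then of_nat (degree E (i,l)) else 0::complex))
        = of_nat (degree E (i,j))"
    proof -
      have "(\<Sum>k<a. \<Sum>l<b. (if (i,l) = (k,j) then of_nat (degree E (i,l)) else 0::complex))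
        = (\<Sum>k<a. \<Sum>l<b. (if (k,l) = (i,j) then of_nat (degree E (i,j)) else 0::complex))"
        by (intro sum.cong refl) auto
      also have "\<dots> = of_nat (degree E (i,j))" by (rule sum_grid_diag[OF that])
      finally show ?thesis .
    qed
    have s2: "(\<Sum>k<a. \<Sum>l<b. (if {(i,l),(k,j)} \<in> E then 1 else 0::complex))
       = of_nat (degree (partial_transpose E) (i,j))"
    proof -
      have "(\<Sum>k<a. \<Sum>l<b. (if {(i,l),(k,j)} \<in> E then 1 else 0::complex))
        = (\<Sum>k<a. \<Sum>l<b. (if {(i,j),(k,l)} \<in> partial_transpose E then 1 else 0::complex))"
        by (simp add: pt_edge)
      then show ?thesis
        using count_sum[of "\<lambda>w. {(i,j),w} \<in> partial_transpose E"]
          degree_neigh[OF pt_grid_graph[OF g] ij] by simp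
    qed
    have "(\<Sum>k<a. \<Sum>l<b. Lv (i,l) (k,j)) = (\<Sum>k<a. \<Sum>l<b. (if (i,l) = (k,j) then of_nat (degree E (i,l)) else 0::complex))
       - (\<Sum>k<a. \<Sum>l<b. (if {(i,l),(k,j)} \<in> E then 1 else 0::complex))"
      unfolding Lv_def by (simp add: sum_subtractf)
    then have "(of_nat (degree E (i,j)) :: complex) = of_nat (degree (partial_transpose E) (i,j))"
      using Lz s1 s2 by simp
    then show ?thesis using of_nat_eq_iff by blast
  qed
  show ?thesis
  proof (rule eq_matI)
    fix r c assume rc: "r < dim_row (degree_mat a b (partial_transpose E))"
        "c < dim_col (degree_mat a b (partial_transpose E))"
    then have r: "r < a*b" and c: "c < a*b" by (simp_all add: degree_mat_def)
    then have bpos: "b > 0" by (cases b) auto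
    have "r div b < a" using r by (simp add: less_mult_imp_div_less)
    moreover have "r mod b < b" using bpos by simp
    ultimately have "degree E (vtx b r) = degree (partial_transpose E) (vtx b r)"
      unfolding vtx_def by (rule degeq)
    then show "degree_mat a b E $$ (r, c) = degree_mat a b (partial_transpose E) $$ (r, c)"
      using r c by (auto simp: degree_mat_def)
  qed (simp_all add: degree_mat_def)
qed

end
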